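(* Let $\phi:M_D(\mathbb{C})\to M_D(\mathbb{C})$ be a primitive unital Schwarz map and $n\in\mathbb{N}$. Then $\mathcal{M}_{\phi^n}=\mathcal{M}_{\phi^{n+1}}$ if and only if $n\ge\kappa(\phi)$.
   Context: $M_D(\mathbb{C})$ is the algebra of complex $D\times D$ matrices. A linear map $\phi$ is a unital Schwarz map if $\phi(I)=I$ and $\phi(a^*a)\ge\phi(a)^*\phi(a)$ for all $a$; it is primitive if some power $\phi^n$ maps every nonzero positive semidefinite matrix to a positive definite matrix. For a unital Schwarz map $\psi$, the multiplicative domain is $\mathcal{M}_\psi=\{a : \psi(a^*a)=\psi(a)^*\psi(a) \text{ and } \psi(aa^* )=\psi(a)\psi(a)^*\}$; for primitive unital Schwarz $\phi$ one has $\mathcal{M}_{\phi^{n+1}}\subseteq\mathcal{M}_{\phi^n}$ for all $n$, and $\kappa(\phi)$ is the minimal $k\in\mathbb{N}$ with $\bigcap_{n}\mathcal{M}_{\phi^n}=\mathcal{M}_{\phi^k}$. *)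

theory Defs
  imports "HOL-Analysis.Analysis" "HOL-Library.Complex_Order"
begin

text \<open>Complex D x D matrices are represented as complex^'n^'n with D = CARD('n).\<close>

definition cscale :: "complex \<Rightarrow> complex^'n^'m \<Rightarrow> complex^'n^'m" where
  "cscale c A = (\<chi> i j. c * A$i$j)"

definition cadj :: "complex^'n^'m \<Rightarrow> complex^'m^'n" where
  "cadj A = (\<chi> i j. cnj (A$j$i))"

definition cquad :: "complex^'n^'n \<Rightarrow> complex^'n \<Rightarrow> complex" where
  "cquad A v = (\<Sum>i\<in>UNIV. cnj (v$i) * (A *v v)$i)"

definition psd :: "complex^'n^'n \<Rightarrow> bool" where
  "psd A \<longleftrightarrow> (\<forall>v. 0 \<le> cquad A v)"

definition pos_def :: "complex^'n^'n \<Rightarrow> bool" where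
  "pos_def A \<longleftrightarrow> (\<forall>v. v \<noteq> 0 \<longrightarrow> 0 < cquad A v)"

definition loewner_le :: "complex^'n^'n \<Rightarrow> complex^'n^'n \<Rightarrow> bool" where
  "loewner_le A B \<longleftrightarrow> psd (B - A)"

definition clinear_map :: "(complex^'n^'n \<Rightarrow> complex^'n^'n) \<Rightarrow> bool" where
  "clinear_map f \<longleftrightarrow> (\<forall>A B. f (A + B) = f A + f B) \<and> (\<forall>c A. f (cscale c A) = cscale c (f A))"

definition unital_schwarz :: "(complex^'n^'n \<Rightarrow> complex^'n^'n) \<Rightarrow> bool" where
  "unital_schwarz f \<longleftrightarrow> clinear_map f \<and> f (mat 1) = mat 1 \<and>
     (\<forall>a. loewner_le (cadj (f a) ** f a) (f (cadj a ** a)))"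

definition primitive :: "(complex^'n^'n \<Rightarrow> complex^'n^'n) \<Rightarrow> bool" where
  "primitive f \<longleftrightarrow> (\<exists>n. \<forall>A. psd A \<and> A \<noteq> 0 \<longrightarrow> pos_def ((f ^^ n) A))"

definition mult_domain :: "(complex^'n^'n \<Rightarrow> complex^'n^'n) \<Rightarrow> (complex^'n^'n) set" where
  "mult_domain psi = {a. psi (cadj a ** a) = cadj (psi a) ** psi a \<and>
                         psi (a ** cadj a) = psi a ** cadj (psi a)}"

definition kappa :: "(complex^'n^'n \<Rightarrow> complex^'n^'n) \<Rightarrow> nat" where
  "kappa f = (LEAST k. (\<Inter>n. mult_domain (f ^^ n)) = mult_domain (f ^^ k))"

end

theory Submission
  imports Defs
begin

lemma NL_herm:
  fixes A B z1 z2 :: complex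
  assumes H: "\<And>t. 0 \<le> A + t*z1 + cnj t*z2 + t*cnj t*B" and "0 \<le> A" "0 \<le> B"
  shows "z1 = cnj z2"
proof -
  have "0 \<le> A + 1*z1 + cnj 1*z2 + 1*cnj 1*B" by (rule H)
  hence 1: "Im z1 + Im z2 = 0" using assms(2,3) by (auto simp: less_eq_complex_def)
  have "0 \<le> A + \<i>*z1 + cnj \<i>*z2 + \<i>*cnj \<i>*B" by (rule H)
  hence 2: "Re z1 - Re z2 = 0" using assms(2,3) by (auto simp: less_eq_complex_def)
  show ?thesis using 1 2 by (simp add: complex_eq_iff)
qed

lemma NL_zero:
  fixes A B z1 z2 :: complex
  assumes H: "\<And>t. 0 \<le> A + t*z1 + cnj t*z2 + t*cnj t*B" and "A = 0" "0 \<le> B"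
  shows "z2 = 0"
proof -
  have h: "z1 = cnj z2" using NL_herm[OF H] assms by simp
  obtain b where b: "B = of_real b" "b \<ge> 0" using assms(3)
    by (metis complex_is_Real_iff less_eq_complex_def of_real_Re zero_complex.sel(1) zero_complex.sel(2))
  define r where "r = 1/(b+1)"
  have r: "r > 0" "r * b < 1" using b by (auto simp: r_def field_simps)
  have "0 \<le> A + (-of_real r*z2)*z1 + cnj (-of_real r*z2)*z2 + (-of_real r*z2)*cnj (-of_real r*z2)*B" by (rule H)
  hence "0 \<le> Re (A + (-of_real r*z2)*z1 + cnj (-of_real r*z2)*z2 + (-of_real r*z2)*cnj (-of_real r*z2)*B)"
    by (simp add: less_eq_complex_def)
  hence "0 \<le> -2*r*(Re z2^2 + Im z2^2) + r*r*b*(Re z2^2 + Im z2^2)"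
    using assms(2) h b by (simp add: algebra_simps power2_eq_square)
  hence "0 \<le> r*(Re z2^2 + Im z2^2) * (r*b - 2)" by (simp add: algebra_simps)
  moreover have "r*b - 2 < 0" using r by simp
  ultimately have "r*(Re z2^2 + Im z2^2) \<le> 0"
    by (simp add: mult_le_0_iff zero_le_mult_iff)
  hence "Re z2^2 + Im z2^2 \<le> 0" using r by (simp add: mult_le_0_iff)
  hence "Re z2^2 = 0" "Im z2^2 = 0" by (smt (verit) zero_le_power2)+
  thus ?thesis by (simp add: complex_eq_iff)
qed

lemma NL_cs:
  fixes A B z1 z2 :: complex
  assumes H: "\<And>t. 0 \<le> A + t*z1 + cnj t*z2 + t*cnj t*B" and "0 \<le> A" "0 < B"
  shows "z2 * cnj z2 / B \<le> A"
proof -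
  have h: "z1 = cnj z2" using NL_herm[OF H] assms by simp
  obtain b where b: "B = of_real b" "b > 0" using assms(3)
    by (metis complex_is_Real_iff less_complex_def of_real_Re zero_complex.sel(1) zero_complex.sel(2))
  obtain a where a: "A = of_real a" using assms(2)
    by (metis complex_is_Real_iff less_eq_complex_def of_real_Re zero_complex.sel(2))
  have "0 \<le> A + (-z2/B)*z1 + cnj (-z2/B)*z2 + (-z2/B)*cnj (-z2/B)*B" by (rule H)
  also have "\<dots> = A - z2 * cnj z2 / B" using h b by (simp add: field_simps)
  finally show ?thesis by (simp add: less_eq_complex_def)
qed

definition cip :: "complex^'n \<Rightarrow> complex^'n \<Rightarrow> complex" where
  "cip x y = (\<Sum>i\<in>UNIV. cnj (x$i) * y$i)"

definition cbil :: "complex^'n^'n \<Rightarrow> complex^'n \<Rightarrow> complex^'n \<Rightarrow> complex" where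
  "cbil M x y = cip x (M *v y)"

lemma cquad_cbil: "cquad M v = cbil M v v"
  by (simp add: cquad_def cbil_def cip_def)

lemma cbil_expand:
  "cbil P (x + c *s y) (x + c *s y) = cbil P x x + c * cbil P x y + cnj c * cbil P y x + c * cnj c * cbil P y y"
  by (simp add: cbil_def cip_def matrix_vector_mult_def algebra_simps sum.distrib sum_distrib_left)

lemma cip_adj: "cip x (cadj a *v w) = cip (a *v x) w"
proof -
  have "cip x (cadj a *v w) = (\<Sum>i\<in>UNIV. \<Sum>k\<in>UNIV. cnj (x$i) * cnj (a$k$i) * w$k)"
    by (simp add: cip_def cadj_def matrix_vector_mult_def sum_distrib_left mult.assoc)
  also have "\<dots> = (\<Sum>k\<in>UNIV. \<Sum>i\<in>UNIV. cnj (x$i) * cnj (a$k$i) * w$k)"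
    by (rule sum.swap)
  also have "\<dots> = cip (a *v x) w"
    by (simp add: cip_def matrix_vector_mult_def sum_distrib_right sum_distrib_left mult_ac)
  finally show ?thesis .
qed

lemma cbil_adj_mult: "cbil (cadj a ** b) x y = cip (a *v x) (b *v y)"
  by (simp add: cbil_def cip_adj matrix_vector_mul_assoc[symmetric])

lemma cip_self_nonneg: "0 \<le> cip x x"
  unfolding cip_def by (rule sum_nonneg) (simp add: less_eq_complex_def)

lemma psd_adj_mult: "psd (cadj a ** a)"
  by (simp add: psd_def cquad_cbil cbil_adj_mult cip_self_nonneg)

lemma cbil_add: "cbil (M + N) x y = cbil M x y + cbil N x y"
  by (simp add: cbil_def cip_def matrix_vector_mult_add_rdistrib algebra_simps sum.distrib)

lemma cbil_diff: "cbil (M - N) x y = cbil M x y - cbil N x y"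
  by (simp add: cbil_def cip_def matrix_vector_mult_def algebra_simps sum_subtractf)

lemma cbil_neg: "cbil (- M) x y = - cbil M x y"
  by (simp add: cbil_def cip_def matrix_vector_mult_def algebra_simps sum_negf)

lemma cbil_scale: "cbil (cscale c M) x y = c * cbil M x y"
  by (simp add: cbil_def cip_def cscale_def matrix_vector_mult_def algebra_simps sum_distrib_left)

lemma cbil_zero[simp]: "cbil 0 x y = 0"
  by (simp add: cbil_def cip_def matrix_vector_mult_def)

lemma cip_axis: "cip (axis i 1) w = w $ i"
proof -
  have "\<And>k. cnj (axis i 1 $ k) * w$k = (if k = i then w$k else 0)" by (simp add: axis_def)
  hence "cip (axis i 1) w = (\<Sum>k\<in>UNIV. if k = i then w$k else 0)" by (simp add: cip_def)
  thus ?thesis by simp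
qed

lemma mv_axis: "(P *v axis j 1) $ k = P$k$j"
proof -
  have "\<And>l. P$k$l * (axis j 1 $ l) = (if l = j then P$k$l else 0)" by (simp add: axis_def)
  hence "(P *v axis j 1) $ k = (\<Sum>l\<in>UNIV. if l = j then P$k$l else 0)" by (simp add: matrix_vector_mult_def)
  thus ?thesis by simp
qed

lemma cbil_axis: "cbil P (axis i 1) (axis j 1) = P$i$j"
  by (simp add: cbil_def cip_axis mv_axis)

lemma psd_H:
  assumes "psd P"
  shows "0 \<le> cbil P x x + t * cbil P x y + cnj t * cbil P y x + t * cnj t * cbil P y y"
  using assms unfolding psd_def cquad_cbil by (metis cbil_expand)

lemma psd_herm: "psd P \<Longrightarrow> cbil P x y = cnj (cbil P y x)"
  by (rule NL_herm[OF psd_H]) (auto simp: psd_def cquad_cbil)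

lemma psd_cs_zero: "psd P \<Longrightarrow> cquad P x = 0 \<Longrightarrow> cbil P y x = 0"
  by (rule NL_zero[OF psd_H]) (auto simp: psd_def cquad_cbil)

lemma psd_cs: "psd P \<Longrightarrow> 0 < cquad P y \<Longrightarrow> cbil P y x * cnj (cbil P y x) / cquad P y \<le> cquad P x"
  unfolding cquad_cbil by (rule NL_cs[OF psd_H]) (auto simp: psd_def cquad_cbil)

lemma quad_zero_imp_zero:
  assumes "\<And>v. cquad M v = 0" shows "M = 0"
proof -
  have p: "psd M" using assms by (simp add: psd_def)
  have "M$i$j = 0" for i j
    using psd_cs_zero[OF p assms] cbil_axis by metis
  thus ?thesis by (simp add: vec_eq_iff)
qed

lemma psd_antisym: "psd P \<Longrightarrow> psd (- P) \<Longrightarrow> P = 0"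
  apply (rule quad_zero_imp_zero)
  apply (simp add: psd_def cquad_cbil cbil_neg)
  by (metis antisym neg_0_le_iff_le)

lemma loewner_antisym: "loewner_le A B \<Longrightarrow> loewner_le B A \<Longrightarrow> A = B"
  unfolding loewner_le_def using psd_antisym[of "B - A"] by simp

lemma psd_add: "psd P \<Longrightarrow> psd Q \<Longrightarrow> psd (P + Q)"
  by (simp add: psd_def cquad_cbil cbil_add add_nonneg_nonneg)

lemma psd_scale: "psd P \<Longrightarrow> 0 \<le> c \<Longrightarrow> psd (cscale c P)"
  by (simp add: psd_def cquad_cbil cbil_scale)

lemma psd_zero: "psd 0" by (simp add: psd_def cquad_cbil)

lemma loewner_trans: "loewner_le A B \<Longrightarrow> loewner_le B C \<Longrightarrow> loewner_le A C"
  unfolding loewner_le_def using psd_add[of "B - A" "C - B"] by simp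

lemma psd_hermitian: "psd P \<Longrightarrow> cadj P = P"
  unfolding cadj_def vec_eq_iff
  by (metis cbil_axis psd_herm vec_lambda_beta)

lemma cadj_cadj[simp]: "cadj (cadj A) = A" by (simp add: cadj_def vec_eq_iff)
lemma cadj_add: "cadj (A + B) = cadj A + cadj B" by (simp add: cadj_def vec_eq_iff)
lemma cadj_diff: "cadj (A - B) = cadj A - cadj B" by (simp add: cadj_def vec_eq_iff)
lemma cadj_zero[simp]: "cadj 0 = 0" by (simp add: cadj_def vec_eq_iff)
lemma cadj_scale: "cadj (cscale c A) = cscale (cnj c) (cadj A)" by (simp add: cadj_def cscale_def vec_eq_iff)
lemma cadj_scaleR: "cadj (r *\<^sub>R A) = r *\<^sub>R cadj A" by (simp add: cadj_def vec_eq_iff; simp add: scaleR_conv_of_real)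
lemma cadj_mat1[simp]: "cadj (mat 1 :: complex^'n^'n) = mat 1" by (simp add: cadj_def mat_def vec_eq_iff)
lemma cadj_mult: "cadj (A ** B) = cadj B ** cadj A"
  by (simp add: cadj_def matrix_matrix_mult_def vec_eq_iff mult.commute)
lemma scale_mult_left: "cscale c A ** B = cscale c (A ** B)"
  by (simp add: cscale_def matrix_matrix_mult_def vec_eq_iff sum_distrib_left mult.assoc)
lemma scale_mult_right: "A ** cscale c B = cscale c (A ** B)"
  by (simp add: cscale_def matrix_matrix_mult_def vec_eq_iff sum_distrib_left mult_ac)
lemma cscale_add: "cscale c (A + B) = cscale c A + cscale c B" by (simp add: cscale_def vec_eq_iff algebra_simps)
lemma cscale_diff: "cscale c (A - B) = cscale c A - cscale c B" by (simp add: cscale_def vec_eq_iff algebra_simps)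
lemma cscale_scale: "cscale c (cscale d A) = cscale (c*d) A" by (simp add: cscale_def vec_eq_iff)
lemma cscale_one[simp]: "cscale 1 A = A" by (simp add: cscale_def vec_eq_iff)
lemma cscale_zero[simp]: "cscale 0 A = 0" by (simp add: cscale_def vec_eq_iff)
lemma cscale_of_real: "cscale (of_real r) A = r *\<^sub>R A" by (simp add: cscale_def vec_eq_iff; simp add: scaleR_conv_of_real)
lemma cscale_zero_right[simp]: "cscale c 0 = 0" by (simp add: cscale_def vec_eq_iff)
lemma cscale_m1: "cscale (-1) A = - A" by (simp add: cscale_def vec_eq_iff)
lemma mult_add_right: "(A + B) ** (C::'a::semiring_1^'p^'n) = A ** C + B ** C"
  by (simp add: matrix_matrix_mult_def vec_eq_iff algebra_simps sum.distrib)

lemma adj_expand: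
  "cadj (a + cscale c b) ** (a + cscale c b) =
    cadj a ** a + cscale c (cadj a ** b) + cscale (cnj c) (cadj b ** a) + cscale (c * cnj c) (cadj b ** b)"
proof -
  have "cadj (a + cscale c b) = cadj a + cscale (cnj c) (cadj b)" by (simp add: cadj_add cadj_scale)
  hence "cadj (a + cscale c b) ** (a + cscale c b) = cadj a ** a + cadj a ** cscale c b
     + (cscale (cnj c) (cadj b) ** a + cscale (cnj c) (cadj b) ** cscale c b)"
    by (simp add: matrix_add_ldistrib mult_add_right add.assoc)
  also have "\<dots> = cadj a ** a + cscale c (cadj a ** b) + (cscale (cnj c) (cadj b ** a) + cscale (c * cnj c) (cadj b ** b))"
    by (simp add: scale_mult_left scale_mult_right cscale_scale)
  finally show ?thesis by (simp add: add.assoc)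
qed

lemma lin_add: "clinear_map f \<Longrightarrow> f (A + B) = f A + f B" by (simp add: clinear_map_def)
lemma lin_scale: "clinear_map f \<Longrightarrow> f (cscale c A) = cscale c (f A)" by (simp add: clinear_map_def)
lemma lin_zero: "clinear_map f \<Longrightarrow> f 0 = 0"
  using lin_scale[of f 0 0] by simp
lemma lin_neg: "clinear_map f \<Longrightarrow> f (- A) = - f A"
  using lin_scale[of f "-1" A] by (simp add: cscale_m1)
lemma lin_diff: "clinear_map f \<Longrightarrow> f (A - B) = f A - f B"
  using lin_add[of f A "- B"] lin_neg[of f B] by simp
lemma lin_scaleR: "clinear_map f \<Longrightarrow> f (r *\<^sub>R A) = r *\<^sub>R f A"
  using lin_scale[of f "of_real r" A] by (simp add: cscale_of_real)
lemma lin_comp: "clinear_map f \<Longrightarrow> clinear_map g \<Longrightarrow> clinear_map (f \<circ> g)"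
  by (simp add: clinear_map_def)
lemma lin_id: "clinear_map id" by (simp add: clinear_map_def)

lemma us_lin: "unital_schwarz f \<Longrightarrow> clinear_map f" by (simp add: unital_schwarz_def)
lemma us_unit: "unital_schwarz f \<Longrightarrow> f (mat 1) = mat 1" by (simp add: unital_schwarz_def)
lemma us_sch: "unital_schwarz f \<Longrightarrow> psd (f (cadj a ** a) - cadj (f a) ** f a)"
  by (simp add: unital_schwarz_def loewner_le_def)

lemma us_sq_psd: "unital_schwarz f \<Longrightarrow> psd (f (cadj (a::complex^'n^'n) ** a))"
  using psd_add[OF us_sch[of f a] psd_adj_mult[of "f a"]] by simp

lemma cquad_axis: "cquad P (axis i 1) = P$i$i"
  by (simp add: cquad_cbil cbil_axis)

lemma herm_entry: "psd P \<Longrightarrow> P$i$j = cnj (P$j$i)"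
  by (metis cbil_axis psd_herm)

lemma pos_induct:
  assumes lin: "clinear_map f" and sq: "\<And>x::complex^'n^'n. psd (f (cadj x ** x))" and fin: "finite S"
  shows "\<forall>P. psd P \<and> (\<forall>i. i \<notin> S \<longrightarrow> (\<forall>j. P$i$j = 0)) \<longrightarrow> psd (f P)"
  using fin
proof (induction S rule: finite_induct)
  case empty
  show ?case
  proof (intro allI impI)
    fix P :: "complex^'n^'n" assume "psd P \<and> (\<forall>i. i \<notin> {} \<longrightarrow> (\<forall>j. P$i$j = 0))"
    hence "P = 0" by (simp add: vec_eq_iff)
    thus "psd (f P)" using lin_zero[OF lin] psd_zero by simp
  qed
next
  case (insert i S)
  show ?case
  proof (intro allI impI)
    fix P :: "complex^'n^'n" assume a: "psd P \<and> (\<forall>k. k \<notin> insert i S \<longrightarrow> (\<forall>j. P$k$j = 0))"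
    hence P: "psd P" and rows: "\<And>k j. k \<notin> insert i S \<Longrightarrow> P$k$j = 0" by auto
    define p where "p = P$i$i"
    have p0: "0 \<le> p" using P cquad_axis[of P i] by (simp add: psd_def p_def) metis
    show "psd (f P)"
    proof (cases "p = 0")
      case True
      have col: "P$j$i = 0" for j
        using psd_cs_zero[OF P, of "axis i 1" "axis j 1"] True by (simp add: cquad_axis cbil_axis p_def)
      have "\<forall>k. k \<notin> S \<longrightarrow> (\<forall>j. P$k$j = 0)"
      proof (intro allI impI)
        fix k j assume "k \<notin> S"
        show "P$k$j = 0"
        proof (cases "k = i")
          case True thus ?thesis using herm_entry[OF P, of i j] col[of j] by simp
        qed (use rows \<open>k \<notin> S\<close> in auto)
      qed
      thus ?thesis using insert.IH P by blast
    next
      case False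
      hence pp: "0 < p" using p0 by simp
      define w where "w = (\<chi> k. P$k$i)"
      define R :: "complex^'n^'n" where "R = (\<chi> a b. if a = i then cnj (w$b) else 0)"
      define W where "W = cadj R ** R"
      have Wij: "W$k$l = w$k * cnj (w$l)" for k l
      proof -
        have "\<And>m. cnj (R$m$k) * R$m$l = (if m = i then w$k * cnj (w$l) else 0)"
          by (simp add: R_def)
        hence "W$k$l = (\<Sum>m\<in>UNIV. if m = i then w$k * cnj (w$l) else 0)"
          by (simp add: W_def matrix_matrix_mult_def cadj_def)
        thus ?thesis by simp
      qed
      define P' where "P' = P - cscale (1/p) W"
      have Rv: "(R *v v) $ i = cbil P (axis i 1) v" for v
      proof -
        have "(R *v v) $ i = (\<Sum>b\<in>UNIV. cnj (P$b$i) * v$b)"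
          by (simp add: R_def w_def matrix_vector_mult_def)
        also have "\<dots> = (\<Sum>b\<in>UNIV. P$i$b * v$b)"
          using herm_entry[OF P] by (metis complex_cnj_cnj)
        also have "\<dots> = cbil P (axis i 1) v"
          by (simp add: cbil_def cip_axis matrix_vector_mult_def)
        finally show ?thesis .
      qed
      have Rv0: "(R *v v) $ k = 0" if "k \<noteq> i" for k v
        using that by (simp add: R_def matrix_vector_mult_def)
      have cqW: "cquad W v = cnj (cbil P (axis i 1) v) * cbil P (axis i 1) v" for v
      proof -
        have "cquad W v = cip (R *v v) (R *v v)"
          by (simp add: W_def cquad_cbil cbil_adj_mult)
        also have "\<dots> = (\<Sum>k\<in>UNIV. if k = i then cnj ((R *v v)$i) * (R *v v)$i else 0)"
          unfolding cip_def by (rule sum.cong) (auto simp: Rv0)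
        finally show ?thesis by (simp add: Rv)
      qed
      have psdP': "psd P'"
        unfolding psd_def
      proof
        fix v
        have cs: "cbil P (axis i 1) v * cnj (cbil P (axis i 1) v) / p \<le> cquad P v"
          using psd_cs[OF P, of "axis i 1" v] pp by (simp add: cquad_axis p_def)
        have "cquad P' v = cquad P v - (1/p) * cquad W v"
          by (simp add: P'_def cquad_cbil cbil_diff cbil_scale)
        also have "\<dots> = cquad P v - cbil P (axis i 1) v * cnj (cbil P (axis i 1) v) / p"
          by (simp add: cqW)
        finally show "0 \<le> cquad P' v" using cs by simp
      qed
      have rows': "\<forall>k. k \<notin> S \<longrightarrow> (\<forall>j. P'$k$j = 0)"
      proof (intro allI impI)
        fix k j assume kS: "k \<notin> S"
        show "P'$k$j = 0"
        proof (cases "k = i")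
          case True
          have "P'$i$j = P$i$j - (1/p) * (p * cnj (P$j$i))"
            by (simp add: P'_def cscale_def Wij w_def p_def)
          also have "\<dots> = 0" using pp herm_entry[OF P, of i j] by simp
          finally show ?thesis using True by simp
        next
          case False
          hence "k \<notin> insert i S" using kS by simp
          thus ?thesis by (simp add: P'_def cscale_def Wij w_def rows)
        qed
      qed
      have fP': "psd (f P')" using insert.IH psdP' rows' by blast
      have ip: "0 \<le> 1/p" using pp by (auto simp: less_complex_def less_eq_complex_def Re_divide Im_divide)
      have "P = P' + cscale (1/p) W" by (simp add: P'_def)
      hence "f P = f P' + cscale (1/p) (f W)" by (simp add: lin_add[OF lin] lin_scale[OF lin])
      moreover have "psd (cscale (1/p) (f W))"
        using psd_scale[OF sq[of R], of "1/p"] ip by (simp add: W_def)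
      ultimately show ?thesis using psd_add[OF fP'] by metis
    qed
  qed
qed

lemma us_pos:
  assumes "unital_schwarz f" "psd P" shows "psd (f P)"
proof -
  have "\<forall>P. psd P \<and> (\<forall>i. i \<notin> UNIV \<longrightarrow> (\<forall>j. P$i$j = 0)) \<longrightarrow> psd (f P)"
    by (rule pos_induct) (use assms us_lin us_sq_psd in auto)
  thus ?thesis using assms by auto
qed

lemma us_herm:
  assumes us: "unital_schwarz f" shows "f (cadj a) = cadj (f a)"
proof -
  have lin: "clinear_map f" using us by (rule us_lin)
  define G where "G X = f (cadj X) - cadj (f X)" for X
  have Gadd: "G (X + Y) = G X + G Y" for X Y
    by (simp add: G_def cadj_add lin_add[OF lin])
  have Gsc: "G (cscale c X) = cscale (cnj c) (G X)" for c X
    by (simp add: G_def cadj_scale lin_scale[OF lin] cscale_diff)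
  have Gpsd: "G P = 0" if "psd P" for P
    using that psd_hermitian[OF that] psd_hermitian[OF us_pos[OF us that]] by (simp add: G_def)
  have GI: "G (mat 1) = 0" using us_unit[OF us] by (simp add: G_def)
  have Y: "cscale (cnj c) (G (cadj a)) + cscale c (G a) = 0" for c
  proof -
    have "cadj (a + cscale c (mat 1)) ** (a + cscale c (mat 1))
          = cadj a ** a + cscale c (cadj a) + cscale (cnj c) a + cscale (c * cnj c) (mat 1)"
      by (simp add: adj_expand)
    hence "0 = G (cadj a ** a + cscale c (cadj a) + cscale (cnj c) a + cscale (c * cnj c) (mat 1))"
      using Gpsd[OF psd_adj_mult[of "a + cscale c (mat 1)"]] by simp
    also have "\<dots> = cscale (cnj c) (G (cadj a)) + cscale c (G a)"
      by (simp add: Gadd Gsc GI Gpsd[OF psd_adj_mult])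
    finally show ?thesis by simp
  qed
  have "G a $ r $ s = 0" for r s
  proof -
    have "(cscale (cnj 1) (G (cadj a)) + cscale 1 (G a)) $ r $ s = 0" using Y[of 1] by simp
    hence 1: "G (cadj a) $ r $ s + G a $ r $ s = 0" by (simp add: cscale_def)
    have "(cscale (cnj \<i>) (G (cadj a)) + cscale \<i> (G a)) $ r $ s = 0" using Y[of "\<i>"] by simp
    hence 2: "- \<i> * G (cadj a) $ r $ s + \<i> * G a $ r $ s = 0" by (simp add: cscale_def)
    from 1 2 show ?thesis by (simp add: algebra_simps)
  qed
  hence "G a = 0" by (simp add: vec_eq_iff)
  thus ?thesis by (simp add: G_def)
qed

definition Lset :: "(complex^'n^'n \<Rightarrow> complex^'n^'n) \<Rightarrow> complex^'n^'n \<Rightarrow> bool" where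
  "Lset f a \<longleftrightarrow> f (cadj a ** a) = cadj (f a) ** f a"

lemma md_char: "unital_schwarz f \<Longrightarrow> a \<in> mult_domain f \<longleftrightarrow> Lset f a \<and> Lset f (cadj a)"
  by (simp add: mult_domain_def Lset_def us_herm)

lemma Lset_all:
  assumes us: "unital_schwarz f" and L: "Lset f a"
  shows "f (cadj b ** a) = cadj (f b) ** f a"
proof -
  have lin: "clinear_map f" using us by (rule us_lin)
  define D where "D x y = f (cadj x ** y) - cadj (f x) ** f y" for x y
  have exp: "D (a + cscale t b) (a + cscale t b) =
      D a a + cscale t (D a b) + cscale (cnj t) (D b a) + cscale (t * cnj t) (D b b)" for t
  proof -
    have "D (a + cscale t b) (a + cscale t b) =
       f (cadj (a + cscale t b) ** (a + cscale t b)) -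
       cadj (f a + cscale t (f b)) ** (f a + cscale t (f b))"
      by (simp add: D_def lin_add[OF lin] lin_scale[OF lin])
    also have "\<dots> = D a a + cscale t (D a b) + cscale (cnj t) (D b a) + cscale (t * cnj t) (D b b)"
      unfolding adj_expand by (simp add: D_def lin_add[OF lin] lin_scale[OF lin] cscale_diff algebra_simps)
    finally show ?thesis .
  qed
  have Dpsd: "psd (D x x)" for x using us_sch[OF us] by (simp add: D_def)
  have Daa: "D a a = 0" using L by (simp add: D_def Lset_def)
  have "cquad (D b a) v = 0" for v
  proof (rule NL_zero)
    fix t
    have "0 \<le> cquad (D (a + cscale t b) (a + cscale t b)) v" using Dpsd by (simp add: psd_def)
    thus "0 \<le> cquad (D a a) v + t * cquad (D a b) v + cnj t * cquad (D b a) v + t * cnj t * cquad (D b b) v"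
      by (simp add: exp cquad_cbil cbil_add cbil_scale)
  next
    show "cquad (D a a) v = 0" using Daa by (simp add: cquad_cbil)
    show "0 \<le> cquad (D b b) v" using Dpsd by (simp add: psd_def)
  qed
  hence "D b a = 0" by (rule quad_zero_imp_zero)
  thus ?thesis by (simp add: D_def)
qed

lemma md_subspace:
  assumes us: "unital_schwarz f" shows "subspace (mult_domain f)"
proof -
  have lin: "clinear_map f" using us by (rule us_lin)
  define LA where "LA = {a. \<forall>b. f (cadj b ** a) = cadj (f b) ** f a}"
  have LA: "Lset f a \<longleftrightarrow> a \<in> LA" for a
    using Lset_all[OF us] by (auto simp: LA_def Lset_def)
  have md: "mult_domain f = {a. a \<in> LA \<and> cadj a \<in> LA}"
    using md_char[OF us] LA by blast
  have z: "0 \<in> LA" by (simp add: LA_def lin_zero[OF lin])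
  have ad: "x + y \<in> LA" if "x \<in> LA" "y \<in> LA" for x y
    using that by (simp add: LA_def matrix_add_ldistrib lin_add[OF lin])
  have sc: "c *\<^sub>R x \<in> LA" if "x \<in> LA" for c x
    using that by (simp add: LA_def cscale_of_real[symmetric] scale_mult_right lin_scale[OF lin])
  show ?thesis unfolding md
    by (rule subspaceI) (auto simp: z ad sc cadj_add cadj_scaleR)
qed

lemma us_comp:
  assumes f: "unital_schwarz f" and g: "unital_schwarz g"
  shows "unital_schwarz (f \<circ> g)"
  unfolding unital_schwarz_def
proof (intro conjI allI)
  show "clinear_map (f \<circ> g)" by (rule lin_comp[OF us_lin[OF f] us_lin[OF g]])
  show "(f \<circ> g) (mat 1) = mat 1" using us_unit[OF f] us_unit[OF g] by simp
  fix a
  have 1: "loewner_le (cadj (f (g a)) ** f (g a)) (f (cadj (g a) ** g a))"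
    using f by (simp add: unital_schwarz_def)
  have "psd (f (g (cadj a ** a) - cadj (g a) ** g a))" by (rule us_pos[OF f us_sch[OF g]])
  hence 2: "loewner_le (f (cadj (g a) ** g a)) (f (g (cadj a ** a)))"
    by (simp add: loewner_le_def lin_diff[OF us_lin[OF f]])
  show "loewner_le (cadj ((f \<circ> g) a) ** (f \<circ> g) a) ((f \<circ> g) (cadj a ** a))"
    using loewner_trans[OF 1 2] by simp
qed

lemma us_id: "unital_schwarz id"
  by (simp add: unital_schwarz_def lin_id loewner_le_def psd_zero)

lemma us_pow: "unital_schwarz f \<Longrightarrow> unital_schwarz (f ^^ k)"
  by (induction k) (simp_all add: us_id us_comp)

definition faithful :: "(complex^'n^'n \<Rightarrow> complex^'n^'n) \<Rightarrow> bool" where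
  "faithful f \<longleftrightarrow> (\<forall>X. psd X \<and> f X = 0 \<longrightarrow> X = 0)"

lemma comp_L:
  assumes f: "unital_schwarz f" and g: "unital_schwarz g" and ff: "faithful f"
  shows "Lset (f \<circ> g) a \<longleftrightarrow> Lset g a \<and> Lset f (g a)"
proof
  assume "Lset g a \<and> Lset f (g a)"
  thus "Lset (f \<circ> g) a" by (simp add: Lset_def)
next
  assume H: "Lset (f \<circ> g) a"
  have linf: "clinear_map f" using f by (rule us_lin)
  define X where "X = g (cadj a ** a) - cadj (g a) ** g a"
  have X: "psd X" unfolding X_def by (rule us_sch[OF g])
  have 1: "loewner_le (cadj (f (g a)) ** f (g a)) (f (cadj (g a) ** g a))"
    using f by (simp add: unital_schwarz_def)
  have "psd (f X)" by (rule us_pos[OF f X])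
  hence 2: "loewner_le (f (cadj (g a) ** g a)) (f (g (cadj a ** a)))"
    by (simp add: loewner_le_def X_def lin_diff[OF linf])
  have H': "f (g (cadj a ** a)) = cadj (f (g a)) ** f (g a)" using H by (simp add: Lset_def)
  have eq: "f (cadj (g a) ** g a) = f (g (cadj a ** a))"
    using loewner_antisym[OF 2] 1 H' by simp
  hence "f X = 0" by (simp add: X_def lin_diff[OF linf])
  hence "X = 0" using ff X by (simp add: faithful_def)
  hence "Lset g a" by (simp add: X_def Lset_def)
  moreover have "Lset f (g a)" using eq H' by (simp add: Lset_def)
  ultimately show "Lset g a \<and> Lset f (g a)" by simp
qed

lemma scaleR_comp: "(r *\<^sub>R v) $ i = of_real r * (v $ i :: complex)"
  by (simp only: vector_scaleR_component) (simp add: scaleR_conv_of_real)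

lemma cquad_scaleR: "cquad M (r *\<^sub>R v) = of_real (r^2) * cquad M v"
  by (simp add: cquad_def matrix_vector_mult_def scaleR_comp sum_distrib_left algebra_simps power2_eq_square; simp add: scaleR_conv_of_real mult.assoc)

lemma cquad_id: "cquad (mat 1) v = of_real ((norm v)^2)"
proof -
  have "cquad (mat 1) v = (\<Sum>i\<in>UNIV. cnj (v$i) * v$i)" by (simp add: cquad_def)
  also have "\<dots> = (\<Sum>i\<in>UNIV. of_real ((cmod (v$i))^2))"
    by (rule sum.cong[OF refl]) (metis complex_norm_square mult.commute)
  also have "\<dots> = of_real (\<Sum>i\<in>UNIV. (cmod (v$i))^2)" by simp
  also have "(\<Sum>i\<in>UNIV. (cmod (v$i))^2) = (norm v)^2"
    by (simp add: power2_norm_eq_inner inner_vec_def)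
  finally show ?thesis .
qed

lemma cquad_zero_vec[simp]: "cquad M 0 = 0" by (simp add: cquad_def)

lemma pd_lower:
  assumes pd: "pos_def (Q::complex^'n^'n)"
  shows "\<exists>e>0. psd (Q - cscale (of_real e) (mat 1))"
proof -
  define g where "g v = Re (cquad Q v)" for v :: "complex^'n"
  have cont: "continuous_on (sphere 0 1) g"
    unfolding g_def cquad_def matrix_vector_mult_def by (intro continuous_intros)
  have ne: "sphere (0::complex^'n) 1 \<noteq> {}" by simp
  obtain u where u: "u \<in> sphere 0 1" and umin: "\<And>v. v \<in> sphere 0 1 \<Longrightarrow> g u \<le> g v"
    using continuous_attains_inf[OF compact_sphere ne cont] by blast
  have u0: "u \<noteq> 0" using u by auto
  have gu: "0 < g u" using pd u0 by (simp add: pos_def_def g_def less_complex_def)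
  have Qreal: "cquad Q v = of_real (g v)" if "v \<noteq> 0" for v
    using pd that by (simp add: pos_def_def g_def less_complex_def complex_eq_iff)
  show ?thesis
  proof (intro exI conjI)
    show "0 < g u" by (rule gu)
    show "psd (Q - cscale (of_real (g u)) (mat 1))"
      unfolding psd_def
    proof
      fix v :: "complex^'n"
      show "0 \<le> cquad (Q - cscale (of_real (g u)) (mat 1)) v"
      proof (cases "v = 0")
        case True thus ?thesis by simp
      next
        case False
        define w where "w = (1 / norm v) *\<^sub>R v"
        have w: "w \<in> sphere 0 1" using False by (simp add: w_def)
        have vw: "v = norm v *\<^sub>R w" using False by (simp add: w_def)
        have w0: "w \<noteq> 0" using w by auto
        have Qw: "cquad Q w = of_real (g w)" by (rule Qreal[OF w0])
        have "cquad (Q - cscale (of_real (g u)) (mat 1)) v = cquad Q v - of_real (g u) * cquad (mat 1) v"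
          by (simp add: cquad_cbil cbil_diff cbil_scale)
        also have "\<dots> = of_real ((norm v)^2) * (of_real (g w) - of_real (g u))"
          using Qw vw cquad_scaleR[of Q "norm v" w] by (auto simp: cquad_id algebra_simps)
        also have "\<dots> = of_real ((norm v)^2 * (g w - g u))" by simp
        finally show ?thesis using umin[OF w] by (simp add: less_eq_complex_def)
      qed
    qed
  qed
qed

lemma faithful_pow:
  fixes phi :: "complex^'n^'n \<Rightarrow> complex^'n^'n"
  assumes us: "unital_schwarz phi" and pr: "primitive phi"
  shows "faithful (phi ^^ k)"
  unfolding faithful_def
proof (intro allI impI)
  fix X assume a: "psd X \<and> (phi ^^ k) X = 0"
  show "X = 0"
  proof (rule ccontr)
    assume X0: "X \<noteq> 0"
    obtain N where N: "\<And>A. psd A \<and> A \<noteq> 0 \<Longrightarrow> pos_def ((phi ^^ N) A)"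
      using pr by (auto simp: primitive_def)
    define Q where "Q = (phi ^^ N) X"
    have Q: "pos_def Q" using N a X0 by (simp add: Q_def)
    have "(phi ^^ k) Q = (phi ^^ N) ((phi ^^ k) X)"
      unfolding Q_def by (metis comp_apply funpow_add add.commute)
    hence kQ: "(phi ^^ k) Q = 0" using a lin_zero[OF us_lin[OF us_pow[OF us]]] by simp
    obtain e where e: "e > 0" "psd (Q - cscale (of_real e) (mat 1))" using pd_lower[OF Q] by blast
    have "psd ((phi ^^ k) (Q - cscale (of_real e) (mat 1)))" by (rule us_pos[OF us_pow[OF us] e(2)])
    hence "psd (- cscale (of_real e) (mat 1 :: complex^'n^'n))"
      using kQ us_unit[OF us_pow[OF us]] by (simp add: lin_diff[OF us_lin[OF us_pow[OF us]]] lin_scale[OF us_lin[OF us_pow[OF us]]])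
    hence "0 \<le> cquad (- cscale (of_real e) (mat 1 :: complex^'n^'n)) (axis undefined 1)" by (simp add: psd_def)
    hence "0 \<le> - (of_real e :: complex)" by (simp add: cquad_axis cscale_def mat_def)
    thus False using e(1) by (simp add: less_eq_complex_def)
  qed
qed

theorem lemma3p7:
  fixes phi :: "complex^'n^'n \<Rightarrow> complex^'n^'n" and n :: nat
  assumes "unital_schwarz phi" and "primitive phi"
  shows "mult_domain (phi ^^ n) = mult_domain (phi ^^ Suc n) \<longleftrightarrow> kappa phi \<le> n"
proof -
  note us = assms(1) and pr = assms(2)
  define M where "M k = mult_domain (phi ^^ k)" for k
  have usk: "unital_schwarz (phi ^^ k)" for k by (rule us_pow[OF us])
  have fk: "faithful (phi ^^ k)" for k by (rule faithful_pow[OF us pr])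
  have p1: "phi ^^ 1 = phi" by simp
  have f1: "faithful phi" using fk[of 1] by simp
  have Mc: "a \<in> M k \<longleftrightarrow> Lset (phi ^^ k) a \<and> Lset (phi ^^ k) (cadj a)" for a k
    unfolding M_def by (rule md_char[OF usk])
  have dec: "M (Suc k) \<subseteq> M k" for k
  proof
    fix a assume "a \<in> M (Suc k)"
    hence "Lset (phi \<circ> phi ^^ k) a \<and> Lset (phi \<circ> phi ^^ k) (cadj a)" by (simp add: Mc)
    thus "a \<in> M k" using comp_L[OF us usk f1] by (simp add: Mc)
  qed
  have rec: "a \<in> M (Suc m) \<longleftrightarrow> a \<in> M 1 \<and> phi a \<in> M m" for a m
  proof -
    have e: "phi ^^ Suc m = phi ^^ m \<circ> phi" by (rule funpow_Suc_right)
    have "a \<in> M (Suc m) \<longleftrightarrow> Lset (phi ^^ m \<circ> phi) a \<and> Lset (phi ^^ m \<circ> phi) (cadj a)"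
      by (simp only: Mc e)
    also have "\<dots> \<longleftrightarrow> (Lset phi a \<and> Lset (phi ^^ m) (phi a)) \<and> (Lset phi (cadj a) \<and> Lset (phi ^^ m) (phi (cadj a)))"
      using comp_L[OF usk us fk] by simp
    also have "\<dots> \<longleftrightarrow> a \<in> M 1 \<and> phi a \<in> M m"
      using Mc[of a 1] Mc[of "phi a" m] us_herm[OF us, of a] p1 by auto
    finally show ?thesis .
  qed
  have step: "M (Suc k) = M (Suc (Suc k))" if "M k = M (Suc k)" for k
    using rec[of _ k] rec[of _ "Suc k"] that by blast
  have anti: "m \<le> k \<Longrightarrow> M k \<subseteq> M m" for m k
    by (rule lift_Suc_antimono_le[of M]) (use dec in auto)
  have stab: "M (n0 + d) = M n0" if "M n0 = M (Suc n0)" for n0 d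
  proof -
    have "M (n0 + d) = M (Suc (n0 + d))" for d
      by (induction d) (use that step in auto)
    thus ?thesis by (induction d) auto
  qed
  have inter: "(\<Inter>k. M k) = M n0" if "M n0 = M (Suc n0)" for n0
  proof
    show "(\<Inter>k. M k) \<subseteq> M n0" by blast
    show "M n0 \<subseteq> (\<Inter>k. M k)"
    proof
      fix a assume a: "a \<in> M n0"
      have "a \<in> M k" for k
      proof (cases "k \<le> n0")
        case True thus ?thesis using anti a by blast
      next
        case False
        then obtain d where "k = n0 + d" by (metis le_add_diff_inverse nat_le_linear)
        thus ?thesis using stab[OF that] a by simp
      qed
      thus "a \<in> (\<Inter>k. M k)" by blast
    qed
  qed
  have kdef: "kappa phi = (LEAST k. (\<Inter>j. M j) = M k)" by (simp add: kappa_def M_def)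
  have sub: "subspace (M k)" for k unfolding M_def by (rule md_subspace[OF usk])
  have ex: "\<exists>n0. M n0 = M (Suc n0)"
  proof (rule ccontr)
    assume "\<not> ?thesis"
    hence ne: "M k \<noteq> M (Suc k)" for k by blast
    have lt: "dim (M (Suc k)) < dim (M k)" for k
    proof -
      have "dim (M (Suc k)) \<le> dim (M k)" by (rule dim_subset[OF dec])
      moreover have "dim (M (Suc k)) \<noteq> dim (M k)"
        using subspace_dim_equal[OF sub[of "Suc k"] sub[of k] dec[of k]] ne[of k] by auto
      ultimately show ?thesis by simp
    qed
    have "dim (M k) + k \<le> dim (M 0)" for k
    proof (induction k)
      case (Suc k) thus ?case using lt[of k] by simp
    qed simp
    moreover have "dim (M 0) \<le> DIM(complex^'n^'n)" by (rule dim_subset_UNIV)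
    ultimately have "k \<le> DIM(complex^'n^'n)" for k by (metis add_leD2 le_trans)
    thus False by (metis Suc_n_not_le_n)
  qed
  show ?thesis
  proof
    assume "mult_domain (phi ^^ n) = mult_domain (phi ^^ Suc n)"
    hence "M n = M (Suc n)" by (simp add: M_def)
    hence "(\<Inter>j. M j) = M n" by (rule inter)
    thus "kappa phi \<le> n" unfolding kdef by (rule Least_le)
  next
    assume kn: "kappa phi \<le> n"
    obtain n0 where "M n0 = M (Suc n0)" using ex by blast
    hence "(\<Inter>j. M j) = M n0" by (rule inter)
    hence K: "(\<Inter>j. M j) = M (kappa phi)" unfolding kdef by (rule LeastI)
    have "M n \<subseteq> M (kappa phi)" using anti[OF kn] .
    moreover have "(\<Inter>j. M j) \<subseteq> M (Suc n)" by blast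
    ultimately have "M n = M (Suc n)" using dec[of n] K by blast
    thus "mult_domain (phi ^^ n) = mult_domain (phi ^^ Suc n)" by (simp add: M_def)
  qed
qed

end
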